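(* For all positive integers $b_1,\dots,b_k$, $$\operatorname{op}_{[b_1,\dots,b_k]}(123)=\operatorname{op}_{[b_1,\dots,b_k]}(132).$$
   Context: An ordered set partition of $[N]$ into $k$ blocks is a sequence $B_1/B_2/\cdots/B_k$ of nonempty, pairwise disjoint subsets of $[N]$ whose union is $[N]$; the order of the blocks matters, but not the order of elements within a block. For a permutation $\rho=\rho_1\cdots\rho_m\in\mathcal{S}_m$, an ordered partition $B_1/\cdots/B_k$ contains $\rho$ if there are block indices $i_1<i_2<\cdots<i_m$ and elements $b_j\in B_{i_j}$ such that $b_1\cdots b_m$ is order-isomorphic to $\rho$ (i.e. $b_a<b_c$ iff $\rho_a<\rho_c$); otherwise it avoids $\rho$. For positive integers $b_1,\dots,b_k$, $\operatorname{op}_{[b_1,\dots,b_k]}(\rho)$ is the number of $\rho$-avoiding ordered partitions $B_1/\cdots/B_k$ of $[b_1+\cdots+b_k]$ with $|B_i|=b_i$ for all $i$. *)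

theory Defs
  imports Main
begin

definition ordered_set_partition :: "nat \<Rightarrow> nat set list \<Rightarrow> bool" where
  "ordered_set_partition N Bs \<longleftrightarrow>
     (\<forall>i < length Bs. Bs ! i \<noteq> {}) \<and>
     (\<forall>i < length Bs. \<forall>j < length Bs. i \<noteq> j \<longrightarrow> Bs ! i \<inter> Bs ! j = {}) \<and>
     \<Union> (set Bs) = {1..N}"

text \<open>Pattern containment: rho is a permutation in one-line notation, given as the list
  [rho_1, ..., rho_m].\<close>
definition contains_pattern :: "nat set list \<Rightarrow> nat list \<Rightarrow> bool" where
  "contains_pattern Bs rho \<longleftrightarrow>
     (\<exists>idx :: nat \<Rightarrow> nat. \<exists>x :: nat \<Rightarrow> nat.
        (\<forall>j. Suc j < length rho \<longrightarrow> idx j < idx (Suc j)) \<and>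
        (\<forall>j < length rho. idx j < length Bs \<and> x j \<in> Bs ! (idx j)) \<and>
        (\<forall>a < length rho. \<forall>c < length rho. x a < x c \<longleftrightarrow> rho ! a < rho ! c))"

definition avoids_pattern :: "nat set list \<Rightarrow> nat list \<Rightarrow> bool" where
  "avoids_pattern Bs rho \<longleftrightarrow> \<not> contains_pattern Bs rho"

definition op_count :: "nat list \<Rightarrow> nat list \<Rightarrow> nat" where
  "op_count b rho = card {Bs. ordered_set_partition (sum_list b) Bs \<and>
                             map card Bs = b \<and> avoids_pattern Bs rho}"

end

theory Submission
  imports Defs "HOL-Library.Multiset"
begin


lemma count_img: "finite A \<Longrightarrow> count (image_mset w (mset_set A)) i = card {v\<in>A. w v = i}"
  by (simp add: count_image_mset Int_def conj_commute)

lemma img_val: "finite A \<Longrightarrow> image_mset g (mset_set A) = image_mset h (mset_set A) \<Longrightarrow> q \<in> A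
   \<Longrightarrow> \<exists>q'\<in>A. g q = h q'"
proof -
  assume f: "finite A" and e: "image_mset g (mset_set A) = image_mset h (mset_set A)" and q: "q \<in> A"
  have "g q \<in># image_mset g (mset_set A)" using f q by simp
  then have "g q \<in># image_mset h (mset_set A)" using e by simp
  then show ?thesis using f by auto
qed

lemma swap_img:
  assumes f: "finite A" and b: "b \<notin> A" and p: "p \<in> insert b A"
  shows "add_mset (g0 p) (image_mset (g0(p := g0 b)) (mset_set A)) = image_mset g0 (mset_set (insert b A))"
proof (cases "p = b")
  case True
  have "image_mset (g0(p := g0 b)) (mset_set A) = image_mset g0 (mset_set A)"
    using True by simp
  then show ?thesis using True f b by simp
next
  case False
  then have pA: "p \<in> A" using p by auto
  have A: "A = insert p (A - {p})" using pA by auto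
  have "image_mset (g0(p := g0 b)) (mset_set A) = add_mset (g0 b) (image_mset (g0(p := g0 b)) (mset_set (A - {p})))"
    using f pA by (simp add: mset_set.remove)
  also have "image_mset (g0(p := g0 b)) (mset_set (A - {p})) = image_mset g0 (mset_set (A - {p}))"
    using f by (intro image_mset_cong) auto
  finally have 1: "image_mset (g0(p := g0 b)) (mset_set A) = add_mset (g0 b) (image_mset g0 (mset_set (A - {p})))" .
  have 2: "image_mset g0 (mset_set A) = add_mset (g0 p) (image_mset g0 (mset_set (A - {p})))"
    using f pA by (simp add: mset_set.remove)
  show ?thesis using 1 2 f b by (simp add: add_mset_commute)
qed

lemma D_exists:
  fixes Q :: "nat set"
  shows "finite Q \<Longrightarrow> (\<forall>q1\<in>Q. \<forall>q2\<in>Q. q1 < q2 \<longrightarrow> th q2 \<le> (th q1::nat)) \<Longrightarrow>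
   (\<forall>q\<in>Q. th q < (g0 q::nat)) \<Longrightarrow>
   \<exists>g. image_mset g (mset_set Q) = image_mset g0 (mset_set Q) \<and> (\<forall>q\<in>Q. th q < g q) \<and>
       (\<forall>q1\<in>Q. \<forall>q2\<in>Q. q1 < q2 \<longrightarrow> g q2 \<le> g q1)"
proof (induction Q arbitrary: g0 rule: finite_linorder_min_induct)
  case empty
  then show ?case by auto
next
  case (insert b A)
  have bA: "b \<notin> A" using insert.hyps by auto
  define M where "M = Max (g0 ` insert b A)"
  have fin: "finite (g0 ` insert b A)" using insert.hyps by auto
  have "M \<in> g0 ` insert b A" unfolding M_def by (rule Max_in[OF fin]) auto
  then obtain p where p: "p \<in> insert b A" "g0 p = M" by blast
  have Mge: "g0 q \<le> M" if "q \<in> insert b A" for q unfolding M_def using fin that by auto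
  define g0' where "g0' = g0(p := g0 b)"
  have "\<forall>q\<in>A. th q < g0' q"
  proof
    fix q assume q: "q \<in> A"
    show "th q < g0' q"
    proof (cases "q = p")
      case True
      have "th q \<le> th b" using insert.prems(1) q insert.hyps by auto
      then show ?thesis using True insert.prems(2) unfolding g0'_def by fastforce
    next
      case False then show ?thesis using insert.prems(2) q unfolding g0'_def by auto
    qed
  qed
  then obtain g' where g': "image_mset g' (mset_set A) = image_mset g0' (mset_set A)"
     "\<forall>q\<in>A. th q < g' q" "\<forall>q1\<in>A. \<forall>q2\<in>A. q1 < q2 \<longrightarrow> g' q2 \<le> g' q1"
    using insert.IH[of g0'] insert.prems(1) by auto
  define g where "g = g'(b := M)"
  have gA: "\<forall>q\<in>A. g q = g' q" unfolding g_def using bA by auto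
  have "image_mset g (mset_set A) = image_mset g' (mset_set A)"
    using gA insert.hyps(1) by (intro image_mset_cong) auto
  then have img: "image_mset g (mset_set (insert b A)) = image_mset g0 (mset_set (insert b A))"
    using swap_img[OF insert.hyps(1) bA p(1), of g0] g'(1) insert.hyps bA p(2)
    unfolding g0'_def by (simp add: g_def)
  have le: "g q \<le> M" if qA: "q \<in> A" for q
  proof -
    obtain q' where "q' \<in> A" "g' q = g0' q'" using img_val[OF insert.hyps(1) g'(1) qA] by auto
    then show ?thesis using gA qA Mge unfolding g0'_def by (auto split: if_splits)
  qed
  show ?case
  proof (intro exI conjI)
    show "image_mset g (mset_set (insert b A)) = image_mset g0 (mset_set (insert b A))" by (rule img)
    show "\<forall>q\<in>insert b A. th q < g q"
      using g'(2) gA Mge[of b] insert.prems(2) by (auto simp: g_def)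
    show "\<forall>q1\<in>insert b A. \<forall>q2\<in>insert b A. q1 < q2 \<longrightarrow> g q2 \<le> g q1"
      using g'(3) gA le insert.hyps(2) by (auto simp: g_def) 
  qed
qed

lemma E_exists:
  fixes Q :: "nat set"
  shows "finite Q \<Longrightarrow> (\<forall>q1\<in>Q. \<forall>q2\<in>Q. q1 < q2 \<longrightarrow> th q2 \<le> (th q1::nat)) \<Longrightarrow>
   (\<forall>q\<in>Q. th q < (g0 q::nat)) \<Longrightarrow>
   \<exists>g. image_mset g (mset_set Q) = image_mset g0 (mset_set Q) \<and> (\<forall>q\<in>Q. th q < g q) \<and>
       (\<forall>q1\<in>Q. \<forall>q2\<in>Q. q1 < q2 \<longrightarrow> g q2 < g q1 \<longrightarrow> g q2 \<le> th q1)"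
proof (induction Q arbitrary: g0 rule: finite_linorder_min_induct)
  case empty
  then show ?case by auto
next
  case (insert b A)
  have bA: "b \<notin> A" using insert.hyps by auto
  define S where "S = {x \<in> g0 ` insert b A. th b < x}"
  define M where "M = Min S"
  have fin: "finite S" using insert.hyps unfolding S_def by auto
  have ne: "S \<noteq> {}" using insert.prems(2) unfolding S_def by auto
  have "M \<in> S" unfolding M_def by (rule Min_in[OF fin ne])
  then obtain p where p: "p \<in> insert b A" "g0 p = M" and thM: "th b < M" unfolding S_def by blast
  have Mle: "M \<le> g0 q" if "q \<in> insert b A" "th b < g0 q" for q
    unfolding M_def using fin that unfolding S_def by auto
  define g0' where "g0' = g0(p := g0 b)"
  have "\<forall>q\<in>A. th q < g0' q"
  proof
    fix q assume q: "q \<in> A"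
    show "th q < g0' q"
    proof (cases "q = p")
      case True
      have "th q \<le> th b" using insert.prems(1) q insert.hyps by auto
      then show ?thesis using True insert.prems(2) unfolding g0'_def by fastforce
    next
      case False then show ?thesis using insert.prems(2) q unfolding g0'_def by auto
    qed
  qed
  then obtain g' where g': "image_mset g' (mset_set A) = image_mset g0' (mset_set A)"
     "\<forall>q\<in>A. th q < g' q" "\<forall>q1\<in>A. \<forall>q2\<in>A. q1 < q2 \<longrightarrow> g' q2 < g' q1 \<longrightarrow> g' q2 \<le> th q1"
    using insert.IH[of g0'] insert.prems(1) by auto
  define g where "g = g'(b := M)"
  have gA: "\<forall>q\<in>A. g q = g' q" unfolding g_def using bA by auto
  have "image_mset g (mset_set A) = image_mset g' (mset_set A)"
    using gA insert.hyps(1) by (intro image_mset_cong) auto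
  then have img: "image_mset g (mset_set (insert b A)) = image_mset g0 (mset_set (insert b A))"
    using swap_img[OF insert.hyps(1) bA p(1), of g0] g'(1) insert.hyps bA p(2)
    unfolding g0'_def by (simp add: g_def)
  have le: "g q \<le> th b" if qA: "q \<in> A" and lt: "g q < M" for q
  proof (rule ccontr)
    assume c: "\<not> g q \<le> th b"
    obtain q' where q': "q' \<in> A" "g' q = g0' q'" using img_val[OF insert.hyps(1) g'(1) qA] by auto
    have "\<exists>r\<in>insert b A. g' q = g0 r"
      using q' p(1) unfolding g0'_def by (auto split: if_splits)
    then obtain r where "r \<in> insert b A" "g' q = g0 r" by blast
    then have "M \<le> g' q" using Mle[of r] c gA qA by auto
    then show False using lt gA qA by auto
  qed
  show ?case
  proof (intro exI conjI)
    show "image_mset g (mset_set (insert b A)) = image_mset g0 (mset_set (insert b A))" by (rule img)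
    show "\<forall>q\<in>insert b A. th q < g q"
      using g'(2) gA thM by (auto simp: g_def)
    show "\<forall>q1\<in>insert b A. \<forall>q2\<in>insert b A. q1 < q2 \<longrightarrow> g q2 < g q1 \<longrightarrow> g q2 \<le> th q1"
      using g'(3) gA le insert.hyps(2) by (auto simp: g_def) 
  qed
qed

lemma D_unique:
  fixes Q :: "nat set"
  shows "finite Q \<Longrightarrow> image_mset g1 (mset_set Q) = image_mset (g2::nat\<Rightarrow>nat) (mset_set Q) \<Longrightarrow>
   (\<forall>q1\<in>Q. \<forall>q2\<in>Q. q1 < q2 \<longrightarrow> g1 q2 \<le> g1 q1) \<Longrightarrow>
   (\<forall>q1\<in>Q. \<forall>q2\<in>Q. q1 < q2 \<longrightarrow> g2 q2 \<le> g2 q1) \<Longrightarrow> \<forall>q\<in>Q. g1 q = g2 q"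
proof (induction Q rule: finite_linorder_min_induct)
  case empty
  then show ?case by auto
next
  case (insert b A)
  have bA: "b \<notin> A" using insert.hyps by auto
  have fi: "finite (insert b A)" using insert.hyps by auto
  obtain q where q: "q \<in> insert b A" "g2 b = g1 q" using img_val[OF fi insert.prems(1)[symmetric]] by blast
  obtain r where r: "r \<in> insert b A" "g1 b = g2 r" using img_val[OF fi insert.prems(1)] by blast
  have "g1 q \<le> g1 b" using q(1) insert.prems(2) insert.hyps(2) by (cases "q = b") auto
  moreover have "g2 r \<le> g2 b" using r(1) insert.prems(3) insert.hyps(2) by (cases "r = b") auto
  ultimately have e: "g1 b = g2 b" using q r by simp
  have "image_mset g1 (mset_set A) = image_mset g2 (mset_set A)"
    using insert.prems(1) e insert.hyps(1) bA by simp
  then have "\<forall>q\<in>A. g1 q = g2 q" using insert.IH insert.prems(2,3) by auto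
  then show ?case using e by auto
qed

lemma E_unique:
  fixes Q :: "nat set"
  shows "finite Q \<Longrightarrow> image_mset g1 (mset_set Q) = image_mset (g2::nat\<Rightarrow>nat) (mset_set Q) \<Longrightarrow>
   (\<forall>q\<in>Q. th q < g1 q) \<Longrightarrow> (\<forall>q\<in>Q. th q < g2 q) \<Longrightarrow>
   (\<forall>q1\<in>Q. \<forall>q2\<in>Q. q1 < q2 \<longrightarrow> g1 q2 < g1 q1 \<longrightarrow> g1 q2 \<le> th q1) \<Longrightarrow>
   (\<forall>q1\<in>Q. \<forall>q2\<in>Q. q1 < q2 \<longrightarrow> g2 q2 < g2 q1 \<longrightarrow> g2 q2 \<le> th q1) \<Longrightarrow> \<forall>q\<in>Q. g1 q = g2 q"
proof (induction Q rule: finite_linorder_min_induct)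
  case empty
  then show ?case by auto
next
  case (insert b A)
  have bA: "b \<notin> A" using insert.hyps by auto
  have fi: "finite (insert b A)" using insert.hyps by auto
  obtain q where q: "q \<in> insert b A" "g2 b = g1 q" using img_val[OF fi insert.prems(1)[symmetric]] by blast
  obtain r where r: "r \<in> insert b A" "g1 b = g2 r" using img_val[OF fi insert.prems(1)] by blast
  have "\<not> g2 b < g1 b"
  proof
    assume lt: "g2 b < g1 b"
    then have "q \<noteq> b" using q by auto
    then have bq: "b < q" using q insert.hyps(2) by auto
    have "g1 q < g1 b" using q lt by simp
    then have "g1 q \<le> th b" using insert.prems(4)[rule_format, of b q] q(1) bq by blast
    then show False using q insert.prems(3) by auto
  qed
  moreover have "\<not> g1 b < g2 b"
  proof
    assume lt: "g1 b < g2 b"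
    then have "r \<noteq> b" using r by auto
    then have br: "b < r" using r insert.hyps(2) by auto
    have "g2 r < g2 b" using r lt by simp
    then have "g2 r \<le> th b" using insert.prems(5)[rule_format, of b r] r(1) br by blast
    then show False using r insert.prems(2) by auto
  qed
  ultimately have e: "g1 b = g2 b" by simp
  have "image_mset g1 (mset_set A) = image_mset g2 (mset_set A)"
    using insert.prems(1) e insert.hyps(1) bA by simp
  then have "\<forall>q\<in>A. g1 q = g2 q" using insert.IH insert.prems(2-5) by auto
  then show ?case using e by auto
qed

definition lrmin :: "(nat \<Rightarrow> nat) \<Rightarrow> nat \<Rightarrow> bool" where
  "lrmin w v \<longleftrightarrow> (\<forall>u. 1 \<le> u \<and> u < v \<longrightarrow> w v \<le> w u)"
definition NM :: "nat \<Rightarrow> (nat \<Rightarrow> nat) \<Rightarrow> nat set" where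
  "NM N w = {v\<in>{1..N}. \<not> lrmin w v}"
definition pth :: "(nat \<Rightarrow> nat) \<Rightarrow> nat \<Rightarrow> nat" where
  "pth w q = Min (w ` {1..<q})"
definition mask :: "nat \<Rightarrow> (nat \<Rightarrow> nat) \<Rightarrow> nat \<Rightarrow> nat option" where
  "mask N w v = (if v \<in> {1..N} \<and> lrmin w v then Some (w v) else None)"

lemma nonmin_iff: "1 \<le> q \<Longrightarrow> (\<not> lrmin w q) \<longleftrightarrow> (2 \<le> q \<and> pth w q < w q)"
proof
  assume q: "1 \<le> q" and "\<not> lrmin w q"
  then obtain u where u: "1 \<le> u" "u < q" "w u < w q" unfolding lrmin_def by auto
  then have "pth w q \<le> w u" unfolding pth_def by (intro Min_le) auto
  then show "2 \<le> q \<and> pth w q < w q" using u by auto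
next
  assume "2 \<le> q \<and> pth w q < w q"
  then have "{1..<q} \<noteq> {}" and lt: "Min (w ` {1..<q}) < w q" by (auto simp: pth_def)
  then obtain u where "u \<in> {1..<q}" "w u < w q" by (subst (asm) Min_less_iff) auto
  then show "\<not> lrmin w q" unfolding lrmin_def by auto
qed

lemma pth_witness: assumes "2 \<le> q" shows "\<exists>u. 1 \<le> u \<and> u < q \<and> lrmin w u \<and> w u = pth w q"
proof -
  define U where "U = {u\<in>{1..<q}. w u = pth w q}"
  have "pth w q \<in> w ` {1..<q}" unfolding pth_def using assms by (intro Min_in) auto
  then have ne: "U \<noteq> {}" unfolding U_def by auto
  have fin: "finite U" unfolding U_def by auto
  define u where "u = Min U"
  have uU: "u \<in> U" unfolding u_def using Min_in[OF fin ne] .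
  have "lrmin w u" unfolding lrmin_def
  proof (intro allI impI)
    fix u' assume u': "1 \<le> u' \<and> u' < u"
    then have "u' \<in> {1..<q}" using uU unfolding U_def by auto
    then have "pth w q \<le> w u'" unfolding pth_def by (intro Min_le) auto
    then show "w u \<le> w u'" using uU unfolding U_def by auto
  qed
  then show ?thesis using uU unfolding U_def by auto
qed

lemma pth_le: "1 \<le> u \<Longrightarrow> u < q \<Longrightarrow> pth w q \<le> w u"
  unfolding pth_def by (intro Min_le) auto

lemma pth_anti: "2 \<le> q1 \<Longrightarrow> q1 \<le> q2 \<Longrightarrow> pth w q2 \<le> pth w q1"
  unfolding pth_def by (intro Min_antimono) auto

lemma fiber:
  assumes m: "mask N w' = mask N w"
  shows "NM N w' = NM N w" "\<forall>q\<in>NM N w. pth w' q = pth w q \<and> pth w q < w' q"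
        "\<forall>v\<in>{1..N}. v \<notin> NM N w \<longrightarrow> w' v = w v"
proof -
  have lr: "lrmin w' v \<longleftrightarrow> lrmin w v" if "v \<in> {1..N}" for v
    using fun_cong[OF m, of v] that unfolding mask_def by (auto split: if_splits)
  have eq: "w' v = w v" if "v \<in> {1..N}" "lrmin w v" for v
    using fun_cong[OF m, of v] that unfolding mask_def by (auto split: if_splits)
  show "NM N w' = NM N w" unfolding NM_def using lr by auto
  show "\<forall>v\<in>{1..N}. v \<notin> NM N w \<longrightarrow> w' v = w v" using eq unfolding NM_def by auto
  have pe: "pth w' q = pth w q" if q: "q \<in> {1..N}" "2 \<le> q" for q
  proof -
    obtain u where u: "1 \<le> u" "u < q" "lrmin w u" "w u = pth w q" using pth_witness[OF q(2)] by blast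
    obtain u' where u': "1 \<le> u'" "u' < q" "lrmin w' u'" "w' u' = pth w' q" using pth_witness[OF q(2)] by blast
    have "pth w' q \<le> w' u" using u by (intro pth_le) auto
    moreover have "w' u = w u" using u q by (intro eq) auto
    moreover have "pth w q \<le> w u'" using u' by (intro pth_le) auto
    moreover have "w' u' = w u'" using u' q lr[of u'] by (intro eq) auto
    ultimately show ?thesis using u u' by simp
  qed
  show "\<forall>q\<in>NM N w. pth w' q = pth w q \<and> pth w q < w' q"
  proof
    fix q assume q: "q \<in> NM N w"
    then have q1: "q \<in> {1..N}" "\<not> lrmin w q" "\<not> lrmin w' q" unfolding NM_def using lr by auto
    then have "2 \<le> q" "pth w' q < w' q" using nonmin_iff[of q w'] by auto
    then show "pth w' q = pth w q \<and> pth w q < w' q" using pe q1 by auto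
  qed
qed

lemma fiber_intro:
  assumes eqP: "\<forall>v\<in>{1..N}. v \<notin> NM N w \<longrightarrow> w' v = w v"
      and gt: "\<forall>q\<in>NM N w. pth w q < w' q"
  shows "mask N w' = mask N w"
proof -
  have lr: "lrmin w' v \<longleftrightarrow> lrmin w v" if v: "v \<in> {1..N}" for v
  proof
    assume a: "lrmin w v"
    show "lrmin w' v" unfolding lrmin_def
    proof (intro allI impI)
      fix u assume u: "1 \<le> u \<and> u < v"
      have wv: "w' v = w v" using eqP v a unfolding NM_def by auto
      show "w' v \<le> w' u"
      proof (cases "lrmin w u")
        case True
        then have "w' u = w u" using eqP u v unfolding NM_def by auto
        then show ?thesis using a u wv unfolding lrmin_def by auto
      next
        case False
        then have uN: "u \<in> NM N w" using u v unfolding NM_def by auto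
        then have "pth w u < w' u" using gt by auto
        moreover have "2 \<le> u" using False nonmin_iff[of u w] u by auto
        moreover obtain u0 where "1 \<le> u0" "u0 < u" "w u0 = pth w u" using pth_witness[OF \<open>2 \<le> u\<close>] by blast
        moreover have "w v \<le> w u0" using a \<open>1 \<le> u0\<close> \<open>u0 < u\<close> u unfolding lrmin_def by auto
        ultimately show ?thesis using wv by auto
      qed
    qed
  next
    assume a: "lrmin w' v"
    show "lrmin w v"
    proof (rule ccontr)
      assume c: "\<not> lrmin w v"
      then have vN: "v \<in> NM N w" using v unfolding NM_def by auto
      have "2 \<le> v" using c nonmin_iff[of v w] v by auto
      then obtain u0 where u0: "1 \<le> u0" "u0 < v" "lrmin w u0" "w u0 = pth w v" using pth_witness by blast
      have "w' u0 = w u0" using eqP u0 v unfolding NM_def by auto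
      moreover have "pth w v < w' v" using gt vN by auto
      ultimately have "w' u0 < w' v" using u0 by auto
      then show False using a u0 unfolding lrmin_def by auto
    qed
  qed
  show ?thesis
  proof
    fix v show "mask N w' v = mask N w v"
      using lr[of v] eqP unfolding mask_def NM_def by auto
  qed
qed

definition c123 :: "nat \<Rightarrow> (nat \<Rightarrow> nat) \<Rightarrow> bool" where
  "c123 N w \<longleftrightarrow> (\<exists>p q r. 1 \<le> p \<and> p < q \<and> q < r \<and> r \<le> N \<and> w p < w q \<and> w q < w r)"
definition c132 :: "nat \<Rightarrow> (nat \<Rightarrow> nat) \<Rightarrow> bool" where
  "c132 N w \<longleftrightarrow> (\<exists>p q r. 1 \<le> p \<and> p < q \<and> q < r \<and> r \<le> N \<and> w p < w r \<and> w r < w q)"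

lemma c123_iff: "c123 N w \<longleftrightarrow> (\<exists>q1\<in>NM N w. \<exists>q2\<in>NM N w. q1 < q2 \<and> w q1 < w q2)"
proof
  assume "c123 N w"
  then obtain p q r where *: "1 \<le> p" "p < q" "q < r" "r \<le> N" "w p < w q" "w q < w r" unfolding c123_def by blast
  then have "q \<in> NM N w" "r \<in> NM N w" unfolding NM_def lrmin_def by (auto intro!: exI[of _ p])
  then show "\<exists>q1\<in>NM N w. \<exists>q2\<in>NM N w. q1 < q2 \<and> w q1 < w q2" using * by blast
next
  assume "\<exists>q1\<in>NM N w. \<exists>q2\<in>NM N w. q1 < q2 \<and> w q1 < w q2"
  then obtain q1 q2 where q: "q1 \<in> NM N w" "q2 \<in> NM N w" "q1 < q2" "w q1 < w q2" by blast
  then obtain p where "1 \<le> p" "p < q1" "w p < w q1" unfolding NM_def lrmin_def by auto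
  then have "1 \<le> p \<and> p < q1 \<and> q1 < q2 \<and> q2 \<le> N \<and> w p < w q1 \<and> w q1 < w q2" using q unfolding NM_def by auto
  then show "c123 N w" unfolding c123_def by blast
qed

lemma c132_iff: "c132 N w \<longleftrightarrow> (\<exists>q1\<in>NM N w. \<exists>q2\<in>NM N w. q1 < q2 \<and> w q2 < w q1 \<and> pth w q1 < w q2)"
proof
  assume "c132 N w"
  then obtain p q r where *: "1 \<le> p" "p < q" "q < r" "r \<le> N" "w p < w r" "w r < w q" unfolding c132_def by blast
  then have "q \<in> NM N w" "r \<in> NM N w" unfolding NM_def lrmin_def by (auto intro!: exI[of _ p])
  moreover have "pth w q \<le> w p" using * by (intro pth_le) auto
  ultimately show "\<exists>q1\<in>NM N w. \<exists>q2\<in>NM N w. q1 < q2 \<and> w q2 < w q1 \<and> pth w q1 < w q2" using * by force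
next
  assume "\<exists>q1\<in>NM N w. \<exists>q2\<in>NM N w. q1 < q2 \<and> w q2 < w q1 \<and> pth w q1 < w q2"
  then obtain q1 q2 where q: "q1 \<in> NM N w" "q2 \<in> NM N w" "q1 < q2" "w q2 < w q1" "pth w q1 < w q2" by blast
  have "2 \<le> q1" using q(1) nonmin_iff[of q1 w] unfolding NM_def by auto
  then obtain p where "1 \<le> p" "p < q1" "w p = pth w q1" using pth_witness by blast
  then have "1 \<le> p \<and> p < q1 \<and> q1 < q2 \<and> q2 \<le> N \<and> w p < w q2 \<and> w q2 < w q1" using q unfolding NM_def by auto
  then show "c132 N w" unfolding c132_def by blast
qed

definition Wb :: "nat \<Rightarrow> nat list \<Rightarrow> (nat \<Rightarrow> nat) set" where
  "Wb N b = {w. (\<forall>v. v \<notin> {1..N} \<longrightarrow> w v = 0) \<and> (\<forall>v\<in>{1..N}. w v < length b) \<and>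
               (\<forall>i<length b. card {v\<in>{1..N}. w v = i} = b!i)}"

lemma Wb_img: "w1 \<in> Wb N b \<Longrightarrow> w2 \<in> Wb N b \<Longrightarrow> image_mset w1 (mset_set {1..N}) = image_mset w2 (mset_set {1..N})"
proof (rule multiset_eqI)
  fix i assume a: "w1 \<in> Wb N b" "w2 \<in> Wb N b"
  show "count (image_mset w1 (mset_set {1..N})) i = count (image_mset w2 (mset_set {1..N})) i"
  proof (cases "i < length b")
    case True then show ?thesis using a by (simp add: count_img Wb_def)
  next
    case False
    then have e1: "{v\<in>{1..N}. w1 v = i} = {}" and e2: "{v\<in>{1..N}. w2 v = i} = {}" using a unfolding Wb_def by fastforce+
    have c1: "count (image_mset w1 (mset_set {1..N})) i = card {v\<in>{1..N}. w1 v = i}" by (rule count_img) simp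
    have c2: "count (image_mset w2 (mset_set {1..N})) i = card {v\<in>{1..N}. w2 v = i}" by (rule count_img) simp
    show ?thesis unfolding c1 c2 e1 e2 by simp
  qed
qed

lemma Wb_intro:
  assumes w: "w \<in> Wb N b" and ext: "\<forall>v. v \<notin> {1..N} \<longrightarrow> w' v = 0"
    and img: "image_mset w' (mset_set {1..N}) = image_mset w (mset_set {1..N})"
  shows "w' \<in> Wb N b"
proof -
  have "\<forall>v\<in>{1..N}. w' v < length b"
  proof
    fix v assume v: "v \<in> {1..N}"
    obtain u where "u \<in> {1..N}" "w' v = w u" using img_val[OF _ img v] by auto
    then show "w' v < length b" using w unfolding Wb_def by auto
  qed
  moreover have "\<forall>i<length b. card {v\<in>{1..N}. w' v = i} = b!i"
  proof (intro allI impI)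
    fix i assume "i < length b"
    have "card {v\<in>{1..N}. w' v = i} = count (image_mset w' (mset_set {1..N})) i" by (simp add: count_img)
    also have "\<dots> = card {v\<in>{1..N}. w v = i}" using img by (simp add: count_img)
    finally show "card {v\<in>{1..N}. w' v = i} = b!i" using w \<open>i < length b\<close> unfolding Wb_def by auto
  qed
  ultimately show ?thesis using ext unfolding Wb_def by auto
qed

lemma split_img: "Q \<subseteq> {1..(N::nat)} \<Longrightarrow> image_mset f (mset_set {1..N}) =
   image_mset f (mset_set ({1..N} - Q)) + image_mset f (mset_set Q)"
proof -
  assume Q: "Q \<subseteq> {1..N}"
  have e: "({1..N} - Q) \<union> Q = {1..N}" using Q by auto
  have "mset_set (({1..N} - Q) \<union> Q) = mset_set ({1..N} - Q) + mset_set Q"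
    using finite_subset[OF Q finite_atLeastAtMost] by (intro mset_set_Union) auto
  then have "mset_set {1..N} = mset_set ({1..N} - Q) + mset_set Q" unfolding e .
  then show ?thesis by simp
qed

lemma NM_sub: "NM N w \<subseteq> {1..N}" unfolding NM_def by auto

lemma pth_anti_NM: "\<forall>q1\<in>NM N w. \<forall>q2\<in>NM N w. q1 < q2 \<longrightarrow> pth w q2 \<le> pth w q1"
proof (intro ballI impI)
  fix q1 q2 assume q: "q1 \<in> NM N w" "q2 \<in> NM N w" "q1 < q2"
  then have "2 \<le> q1" using nonmin_iff[of q1 w] unfolding NM_def by auto
  then show "pth w q2 \<le> pth w q1" using q by (intro pth_anti) auto
qed

lemma pth_lt_NM: "\<forall>q\<in>NM N w. pth w q < w q"
  using nonmin_iff unfolding NM_def by auto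

lemma build:
  assumes w: "w \<in> Wb N b" and g: "image_mset g (mset_set (NM N w)) = image_mset w (mset_set (NM N w))"
    and gt: "\<forall>q\<in>NM N w. pth w q < g q"
  defines "w' \<equiv> (\<lambda>v. if v \<in> NM N w then g v else w v)"
  shows "w' \<in> Wb N b" "mask N w' = mask N w" "\<forall>q\<in>NM N w. w' q = g q"
proof -
  show m: "mask N w' = mask N w"
    by (rule fiber_intro) (use gt in \<open>auto simp: w'_def\<close>)
  show "\<forall>q\<in>NM N w. w' q = g q" by (simp add: w'_def)
  have e1: "image_mset w' (mset_set ({1..N} - NM N w)) = image_mset w (mset_set ({1..N} - NM N w))"
    by (intro image_mset_cong) (auto simp: w'_def)
  have fQ: "finite (NM N w)" using finite_subset[OF NM_sub] by auto
  have "image_mset w' (mset_set (NM N w)) = image_mset g (mset_set (NM N w))"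
    using fQ by (intro image_mset_cong) (auto simp: w'_def)
  then have e2: "image_mset w' (mset_set (NM N w)) = image_mset w (mset_set (NM N w))" using g by simp
  show "w' \<in> Wb N b"
  proof (rule Wb_intro[OF w])
    show "\<forall>v. v \<notin> {1..N} \<longrightarrow> w' v = 0" using w NM_sub[of N w] unfolding Wb_def w'_def by auto
    show "image_mset w' (mset_set {1..N}) = image_mset w (mset_set {1..N})"
      using split_img[OF NM_sub[of N w], of w'] split_img[OF NM_sub[of N w], of w] e1 e2 by simp
  qed
qed

lemma same_Q_img:
  assumes "w1 \<in> Wb N b" "w2 \<in> Wb N b" "\<forall>v\<in>{1..N} - Q. w1 v = w2 v" "Q \<subseteq> {1..N}"
  shows "image_mset w1 (mset_set Q) = image_mset w2 (mset_set Q)"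
proof -
  have "image_mset w1 (mset_set ({1..N} - Q)) = image_mset w2 (mset_set ({1..N} - Q))"
    using assms(3) by (intro image_mset_cong) auto
  then show ?thesis using Wb_img[OF assms(1,2)] split_img[OF assms(4), of w1] split_img[OF assms(4), of w2] by simp
qed

lemma ex123: "w \<in> Wb N b \<Longrightarrow> \<exists>w'. w' \<in> Wb N b \<and> \<not> c123 N w' \<and> mask N w' = mask N w"
proof -
  assume w: "w \<in> Wb N b"
  obtain g where g: "image_mset g (mset_set (NM N w)) = image_mset w (mset_set (NM N w))"
     "\<forall>q\<in>NM N w. pth w q < g q" "\<forall>q1\<in>NM N w. \<forall>q2\<in>NM N w. q1 < q2 \<longrightarrow> g q2 \<le> g q1"
    using D_exists[of "NM N w" "pth w" w] finite_subset[OF NM_sub] pth_anti_NM pth_lt_NM by blast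
  define w' where "w' = (\<lambda>v. if v \<in> NM N w then g v else w v)"
  have b: "w' \<in> Wb N b" "mask N w' = mask N w" "\<forall>q\<in>NM N w. w' q = g q"
    using build[OF w g(1,2)] unfolding w'_def by auto
  have "NM N w' = NM N w" using fiber(1)[OF b(2)] .
  then have "\<not> c123 N w'"
  proof -
    assume nm: "NM N w' = NM N w"
    show ?thesis
    proof
      assume "c123 N w'"
      then obtain q1 q2 where q: "q1 \<in> NM N w" "q2 \<in> NM N w" "q1 < q2" "w' q1 < w' q2"
        unfolding c123_iff nm by blast
      then have "g q2 \<le> g q1" using g(3) by blast
      then show False using q b(3) by auto
    qed
  qed
  then show ?thesis using b by blast
qed

lemma ex132: "w \<in> Wb N b \<Longrightarrow> \<exists>w'. w' \<in> Wb N b \<and> \<not> c132 N w' \<and> mask N w' = mask N w"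
proof -
  assume w: "w \<in> Wb N b"
  obtain g where g: "image_mset g (mset_set (NM N w)) = image_mset w (mset_set (NM N w))"
     "\<forall>q\<in>NM N w. pth w q < g q" "\<forall>q1\<in>NM N w. \<forall>q2\<in>NM N w. q1 < q2 \<longrightarrow> g q2 < g q1 \<longrightarrow> g q2 \<le> pth w q1"
    using E_exists[of "NM N w" "pth w" w] finite_subset[OF NM_sub] pth_anti_NM pth_lt_NM by blast
  define w' where "w' = (\<lambda>v. if v \<in> NM N w then g v else w v)"
  have b: "w' \<in> Wb N b" "mask N w' = mask N w" "\<forall>q\<in>NM N w. w' q = g q"
    using build[OF w g(1,2)] unfolding w'_def by auto
  have "NM N w' = NM N w" using fiber(1)[OF b(2)] .
  moreover have "\<forall>q\<in>NM N w. pth w' q = pth w q" using fiber(2)[OF b(2)] by auto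
  ultimately have "\<not> c132 N w'"
  proof -
    assume nm: "NM N w' = NM N w" and pt: "\<forall>q\<in>NM N w. pth w' q = pth w q"
    show ?thesis
    proof
      assume "c132 N w'"
      then obtain q1 q2 where q: "q1 \<in> NM N w" "q2 \<in> NM N w" "q1 < q2" "w' q2 < w' q1" "pth w' q1 < w' q2"
        unfolding c132_iff nm by blast
      then have "g q2 < g q1" using b(3) by auto
      then have "g q2 \<le> pth w q1" using g(3) q by blast
      then show False using q b(3) pt by auto
    qed
  qed
  then show ?thesis using b by blast
qed

lemma un123:
  assumes "w1 \<in> Wb N b" "w2 \<in> Wb N b" "\<not> c123 N w1" "\<not> c123 N w2"
    "mask N w1 = mask N w" "mask N w2 = mask N w"
  shows "w1 = w2"
proof -
  note f1 = fiber[OF assms(5)] and f2 = fiber[OF assms(6)]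
  have P: "\<forall>v\<in>{1..N} - NM N w. w1 v = w2 v" using f1(3) f2(3) by auto
  have img: "image_mset w1 (mset_set (NM N w)) = image_mset w2 (mset_set (NM N w))"
    by (rule same_Q_img[OF assms(1,2) P NM_sub])
  have d1: "\<forall>q1\<in>NM N w. \<forall>q2\<in>NM N w. q1 < q2 \<longrightarrow> w1 q2 \<le> w1 q1"
  proof (intro ballI impI)
    fix q1 q2 assume "q1 \<in> NM N w" "q2 \<in> NM N w" "q1 < q2"
    then have "\<not> w1 q1 < w1 q2" using assms(3) unfolding c123_iff f1(1) by blast
    then show "w1 q2 \<le> w1 q1" by simp
  qed
  have d2: "\<forall>q1\<in>NM N w. \<forall>q2\<in>NM N w. q1 < q2 \<longrightarrow> w2 q2 \<le> w2 q1"
  proof (intro ballI impI)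
    fix q1 q2 assume "q1 \<in> NM N w" "q2 \<in> NM N w" "q1 < q2"
    then have "\<not> w2 q1 < w2 q2" using assms(4) unfolding c123_iff f2(1) by blast
    then show "w2 q2 \<le> w2 q1" by simp
  qed
  have Q: "\<forall>q\<in>NM N w. w1 q = w2 q"
    using D_unique[OF finite_subset[OF NM_sub] img d1 d2] by auto
  show "w1 = w2"
  proof
    fix v show "w1 v = w2 v"
      using P Q assms(1,2) unfolding Wb_def by (cases "v \<in> {1..N}") auto
  qed
qed

lemma un132:
  assumes "w1 \<in> Wb N b" "w2 \<in> Wb N b" "\<not> c132 N w1" "\<not> c132 N w2"
    "mask N w1 = mask N w" "mask N w2 = mask N w"
  shows "w1 = w2"
proof -
  note f1 = fiber[OF assms(5)] and f2 = fiber[OF assms(6)]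
  have P: "\<forall>v\<in>{1..N} - NM N w. w1 v = w2 v" using f1(3) f2(3) by auto
  have img: "image_mset w1 (mset_set (NM N w)) = image_mset w2 (mset_set (NM N w))"
    by (rule same_Q_img[OF assms(1,2) P NM_sub])
  have t1: "\<forall>q\<in>NM N w. pth w q < w1 q" using f1(2) by auto
  have t2: "\<forall>q\<in>NM N w. pth w q < w2 q" using f2(2) by auto
  have d1: "\<forall>q1\<in>NM N w. \<forall>q2\<in>NM N w. q1 < q2 \<longrightarrow> w1 q2 < w1 q1 \<longrightarrow> w1 q2 \<le> pth w q1"
  proof (intro ballI impI)
    fix q1 q2 assume q: "q1 \<in> NM N w" "q2 \<in> NM N w" "q1 < q2" "w1 q2 < w1 q1"
    then have "pth w1 q1 = pth w q1" using f1(2) by auto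
    then have "\<not> pth w q1 < w1 q2" using q assms(3) unfolding c132_iff f1(1) by auto
    then show "w1 q2 \<le> pth w q1" by simp
  qed
  have d2: "\<forall>q1\<in>NM N w. \<forall>q2\<in>NM N w. q1 < q2 \<longrightarrow> w2 q2 < w2 q1 \<longrightarrow> w2 q2 \<le> pth w q1"
  proof (intro ballI impI)
    fix q1 q2 assume q: "q1 \<in> NM N w" "q2 \<in> NM N w" "q1 < q2" "w2 q2 < w2 q1"
    then have "pth w2 q1 = pth w q1" using f2(2) by auto
    then have "\<not> pth w q1 < w2 q2" using q assms(4) unfolding c132_iff f2(1) by auto
    then show "w2 q2 \<le> pth w q1" by simp
  qed
  have Q: "\<forall>q\<in>NM N w. w1 q = w2 q"
    using E_unique[OF finite_subset[OF NM_sub] img t1 t2 d1 d2] by auto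
  show "w1 = w2"
  proof
    fix v show "w1 v = w2 v"
      using P Q assms(1,2) unfolding Wb_def by (cases "v \<in> {1..N}") auto
  qed
qed



lemma card_A: "card {w\<in>Wb N b. \<not> c123 N w} = card {w\<in>Wb N b. \<not> c132 N w}"
proof (rule bij_betw_same_card)
  define F where "F w = (THE w'. w' \<in> Wb N b \<and> \<not> c132 N w' \<and> mask N w' = mask N w)" for w
  define G where "G w = (THE w'. w' \<in> Wb N b \<and> \<not> c123 N w' \<and> mask N w' = mask N w)" for w
  have F: "F w \<in> Wb N b \<and> \<not> c132 N (F w) \<and> mask N (F w) = mask N w" if "w \<in> Wb N b" for w
  proof -
    have "\<exists>!w'. w' \<in> Wb N b \<and> \<not> c132 N w' \<and> mask N w' = mask N w"
      using ex132[OF that] un132 by blast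
    then show ?thesis unfolding F_def by (rule theI')
  qed
  have G: "G w \<in> Wb N b \<and> \<not> c123 N (G w) \<and> mask N (G w) = mask N w" if "w \<in> Wb N b" for w
  proof -
    have "\<exists>!w'. w' \<in> Wb N b \<and> \<not> c123 N w' \<and> mask N w' = mask N w"
      using ex123[OF that] un123 by blast
    then show ?thesis unfolding G_def by (rule theI')
  qed
  show "bij_betw F {w\<in>Wb N b. \<not> c123 N w} {w\<in>Wb N b. \<not> c132 N w}"
  proof (rule bij_betw_byWitness[where f' = G])
    show "\<forall>a\<in>{w \<in> Wb N b. \<not> c123 N w}. G (F a) = a"
    proof
      fix a assume a: "a \<in> {w \<in> Wb N b. \<not> c123 N w}"
      have "F a \<in> Wb N b" "mask N (F a) = mask N a" using F a by auto
      then have "G (F a) \<in> Wb N b" "\<not> c123 N (G (F a))" "mask N (G (F a)) = mask N a" using G by auto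
      then show "G (F a) = a" using un123[of "G (F a)" N b a a] a by auto
    qed
    show "\<forall>a\<in>{w \<in> Wb N b. \<not> c132 N w}. F (G a) = a"
    proof
      fix a assume a: "a \<in> {w \<in> Wb N b. \<not> c132 N w}"
      have "G a \<in> Wb N b" "mask N (G a) = mask N a" using G a by auto
      then have "F (G a) \<in> Wb N b" "\<not> c132 N (F (G a))" "mask N (F (G a)) = mask N a" using F by auto
      then show "F (G a) = a" using un132[of "F (G a)" N b a a] a by auto
    qed
    show "F ` {w \<in> Wb N b. \<not> c123 N w} \<subseteq> {w \<in> Wb N b. \<not> c132 N w}" using F by auto
    show "G ` {w \<in> Wb N b. \<not> c132 N w} \<subseteq> {w \<in> Wb N b. \<not> c123 N w}" using G by auto
  qed
qed

lemma all3: "(\<forall>a<(3::nat). P a) \<longleftrightarrow> P 0 \<and> P 1 \<and> P 2"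
  by (auto simp: numeral_3_eq_3 numeral_2_eq_2 less_Suc_eq)

lemma all3s: "(\<forall>j. Suc j < (3::nat) \<longrightarrow> P j) \<longleftrightarrow> P 0 \<and> P 1"
  by (auto simp: numeral_3_eq_3 less_Suc_eq)

lemma cp3: "contains_pattern Bs [r0, r1, r2] \<longleftrightarrow>
  (\<exists>i0 i1 i2 x0 x1 x2. i0 < i1 \<and> i1 < i2 \<and> i2 < length Bs \<and> x0 \<in> Bs!i0 \<and> x1 \<in> Bs!i1 \<and> x2 \<in> Bs!i2 \<and>
     (x0 < x1 \<longleftrightarrow> r0 < r1) \<and> (x0 < x2 \<longleftrightarrow> r0 < r2) \<and> (x1 < x0 \<longleftrightarrow> r1 < r0) \<and>
     (x1 < x2 \<longleftrightarrow> r1 < r2) \<and> (x2 < x0 \<longleftrightarrow> r2 < r0) \<and> (x2 < x1 \<longleftrightarrow> r2 < r1))"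
  (is "?L \<longleftrightarrow> ?R")
proof
  assume ?L
  have l3: "length [r0,r1,r2] = 3" by simp
  obtain idx x where h0: "\<forall>j. Suc j < length [r0,r1,r2] \<longrightarrow> idx j < idx (Suc j)"
    "\<forall>j<length [r0,r1,r2]. idx j < length Bs \<and> x j \<in> Bs ! (idx j)"
    "\<forall>a<length [r0,r1,r2]. \<forall>c<length [r0,r1,r2]. x a < x c \<longleftrightarrow> [r0, r1, r2] ! a < [r0, r1, r2] ! c"
    using \<open>?L\<close> unfolding contains_pattern_def by blast
  note h = h0[unfolded l3]
  have a: "idx 0 < idx 1" "idx 1 < idx 2" using h(1)[rule_format, of 0] h(1)[rule_format, of 1] by (simp_all add: numeral_2_eq_2)
  have b: "idx 2 < length Bs" "x 0 \<in> Bs!idx 0" "x 1 \<in> Bs!idx 1" "x 2 \<in> Bs!idx 2"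
    using h(2)[rule_format, of 0] h(2)[rule_format, of 1] h(2)[rule_format, of 2] by simp_all
  have c: "(x 0 < x 1 \<longleftrightarrow> r0 < r1)" "(x 0 < x 2 \<longleftrightarrow> r0 < r2)" "(x 1 < x 0 \<longleftrightarrow> r1 < r0)"
     "(x 1 < x 2 \<longleftrightarrow> r1 < r2)" "(x 2 < x 0 \<longleftrightarrow> r2 < r0)" "(x 2 < x 1 \<longleftrightarrow> r2 < r1)"
    using h(3)[rule_format, of 0 1] h(3)[rule_format, of 0 2] h(3)[rule_format, of 1 0]
      h(3)[rule_format, of 1 2] h(3)[rule_format, of 2 0] h(3)[rule_format, of 2 1]
    by (simp_all add: numeral_2_eq_2)
  show ?R using a b c by blast
next
  assume ?R
  then obtain i0 i1 i2 x0 x1 x2 where h: "i0 < i1" "i1 < i2" "i2 < length Bs" "x0 \<in> Bs!i0" "x1 \<in> Bs!i1" "x2 \<in> Bs!i2"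
     "(x0 < x1 \<longleftrightarrow> r0 < r1)" "(x0 < x2 \<longleftrightarrow> r0 < r2)" "(x1 < x0 \<longleftrightarrow> r1 < r0)"
     "(x1 < x2 \<longleftrightarrow> r1 < r2)" "(x2 < x0 \<longleftrightarrow> r2 < r0)" "(x2 < x1 \<longleftrightarrow> r2 < r1)" by blast
  define idx where "idx j = (if j = 0 then i0 else if j = 1 then i1 else i2)" for j :: nat
  define x where "x j = (if j = 0 then x0 else if j = 1 then x1 else x2)" for j :: nat
  have 1: "\<forall>j. Suc j < length [r0,r1,r2] \<longrightarrow> idx j < idx (Suc j)"
    unfolding all3s[of "\<lambda>j. idx j < idx (Suc j)", unfolded numeral_3_eq_3[symmetric]] using h
    by (auto simp: idx_def numeral_3_eq_3 less_Suc_eq)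
  have 2: "\<forall>j<length [r0,r1,r2]. idx j < length Bs \<and> x j \<in> Bs ! (idx j)"
    using h by (auto simp: idx_def x_def numeral_3_eq_3 less_Suc_eq)
  have 3: "\<forall>a<length [r0,r1,r2]. \<forall>c<length [r0,r1,r2]. x a < x c \<longleftrightarrow> [r0, r1, r2] ! a < [r0, r1, r2] ! c"
    using h by (auto simp: x_def less_Suc_eq)
  show ?L unfolding contains_pattern_def using 1 2 3 by blast
qed

definition toB :: "nat \<Rightarrow> nat \<Rightarrow> (nat \<Rightarrow> nat) \<Rightarrow> nat set list" where
  "toB N k w = map (\<lambda>i. {v\<in>{1..N}. w v = i}) [0..<k]"
definition toW :: "nat \<Rightarrow> nat set list \<Rightarrow> nat \<Rightarrow> nat" where
  "toW N Bs v = (if v \<in> {1..N} then (THE i. i < length Bs \<and> v \<in> Bs!i) else 0)"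

lemma toB_nth: "i < k \<Longrightarrow> toB N k w ! i = {v\<in>{1..N}. w v = i}"
  unfolding toB_def by simp
lemma toB_len: "length (toB N k w) = k" unfolding toB_def by simp

lemma L1:
  assumes w: "w \<in> Wb N b" and pos: "\<forall>x\<in>set b. 0 < x"
  shows "ordered_set_partition N (toB N (length b) w)" "map card (toB N (length b) w) = b"
proof -
  show mc: "map card (toB N (length b) w) = b"
    by (rule nth_equalityI) (use w in \<open>auto simp: toB_len toB_nth Wb_def\<close>)
  have ne: "toB N (length b) w ! i \<noteq> {}" if "i < length b" for i
  proof -
    have "card (toB N (length b) w ! i) = b ! i" using mc that by (metis length_map nth_map)
    moreover have "b ! i > 0" using pos that by auto
    ultimately show ?thesis by auto
  qed
  show "ordered_set_partition N (toB N (length b) w)"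
    unfolding ordered_set_partition_def
  proof (intro conjI allI impI)
    show "\<And>i. i < length (toB N (length b) w) \<Longrightarrow> toB N (length b) w ! i \<noteq> {}" using ne by (simp add: toB_len)
    show "\<And>i j. i < length (toB N (length b) w) \<Longrightarrow> j < length (toB N (length b) w) \<Longrightarrow> i \<noteq> j \<Longrightarrow>
       toB N (length b) w ! i \<inter> toB N (length b) w ! j = {}" by (auto simp: toB_len toB_nth)
    show "\<Union> (set (toB N (length b) w)) = {1..N}"
    proof
      show "\<Union> (set (toB N (length b) w)) \<subseteq> {1..N}" unfolding toB_def by auto
      show "{1..N} \<subseteq> \<Union> (set (toB N (length b) w))"
      proof
        fix v assume v: "v \<in> {1..N}"
        then have "w v < length b" using w unfolding Wb_def by auto
        then have "v \<in> toB N (length b) w ! (w v)" using v by (auto simp: toB_nth)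
        moreover have "toB N (length b) w ! (w v) \<in> set (toB N (length b) w)"
          using \<open>w v < length b\<close> by (intro nth_mem) (simp add: toB_len)
        ultimately
        show "v \<in> \<Union> (set (toB N (length b) w))" by blast
      qed
    qed
  qed
qed

lemma L4: "w \<in> Wb N b \<Longrightarrow> toW N (toB N (length b) w) = w"
proof
  fix v assume w: "w \<in> Wb N b"
  show "toW N (toB N (length b) w) v = w v"
  proof (cases "v \<in> {1..N}")
    case True
    then have wv: "w v < length b" using w unfolding Wb_def by auto
    have "(THE i. i < length (toB N (length b) w) \<and> v \<in> toB N (length b) w ! i) = w v"
      using True wv by (intro the_equality) (auto simp: toB_len toB_nth)
    then show ?thesis using True unfolding toW_def by simp
  next
    case False then show ?thesis using w unfolding toW_def Wb_def by auto
  qed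
qed

lemma L3:
  assumes p: "ordered_set_partition N Bs" and mc: "map card Bs = b"
  shows "toW N Bs \<in> Wb N b" "toB N (length b) (toW N Bs) = Bs"
proof -
  have len: "length Bs = length b" using mc by (metis length_map)
  have ex: "\<exists>i. i < length Bs \<and> v \<in> Bs!i" if "v \<in> {1..N}" for v
  proof -
    have "v \<in> \<Union> (set Bs)" using p that unfolding ordered_set_partition_def by auto
    then show ?thesis by (auto simp: in_set_conv_nth)
  qed
  have un: "i = j" if "i < length Bs" "v \<in> Bs!i" "j < length Bs" "v \<in> Bs!j" for i j v
    using p that unfolding ordered_set_partition_def by blast
  have sub: "v \<in> {1..N}" if "i < length Bs" "v \<in> Bs!i" for i v
  proof -
    have "Bs ! i \<in> set Bs" using that by auto
    then show ?thesis using p that unfolding ordered_set_partition_def by blast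
  qed
  have tw: "toW N Bs v = i" if "i < length Bs" "v \<in> Bs!i" for i v
  proof -
    have "(THE i. i < length Bs \<and> v \<in> Bs!i) = i" using that un by blast
    then show ?thesis using sub[OF that] unfolding toW_def by simp
  qed
  have tw2: "toW N Bs v < length Bs \<and> v \<in> Bs ! (toW N Bs v)" if "v \<in> {1..N}" for v
    using ex[OF that] tw by auto
  have blk: "{v\<in>{1..N}. toW N Bs v = i} = Bs ! i" if "i < length Bs" for i
    using that tw tw2 sub by blast
  show "toB N (length b) (toW N Bs) = Bs"
  proof (rule nth_equalityI)
    show "length (toB N (length b) (toW N Bs)) = length Bs" by (simp add: toB_len len)
    fix i assume "i < length (toB N (length b) (toW N Bs))"
    then have i: "i < length Bs" by (simp add: toB_len len)
    then show "toB N (length b) (toW N Bs) ! i = Bs ! i" using blk[OF i] len by (simp add: toB_nth)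
  qed
  show "toW N Bs \<in> Wb N b"
    unfolding Wb_def
  proof (intro CollectI conjI allI impI ballI)
    show "\<And>v. v \<notin> {1..N} \<Longrightarrow> toW N Bs v = 0" unfolding toW_def by auto
    show "\<And>v. v \<in> {1..N} \<Longrightarrow> toW N Bs v < length b" using tw2 len by auto
    show "\<And>i. i < length b \<Longrightarrow> card {v \<in> {1..N}. toW N Bs v = i} = b ! i"
      using blk len mc by (metis nth_map)
  qed
qed

lemma bij_gen:
  assumes pos: "\<forall>x\<in>set b. 0 < x"
    and C: "\<And>w. w \<in> Wb N b \<Longrightarrow> contains_pattern (toB N (length b) w) rho \<longleftrightarrow> C w"
  shows "card {Bs. ordered_set_partition N Bs \<and> map card Bs = b \<and> avoids_pattern Bs rho} = card {w\<in>Wb N b. \<not> C w}"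
proof (rule bij_betw_same_card[symmetric], rule bij_betw_byWitness[where f' = "toW N"])
  show "\<forall>a\<in>{w \<in> Wb N b. \<not> C w}. toW N (toB N (length b) a) = a" using L4 by blast
  show "\<forall>a'\<in>{Bs. ordered_set_partition N Bs \<and> map card Bs = b \<and> avoids_pattern Bs rho}.
          toB N (length b) (toW N a') = a'" using L3 by blast
  show "toB N (length b) ` {w \<in> Wb N b. \<not> C w} \<subseteq> {Bs. ordered_set_partition N Bs \<and> map card Bs = b \<and> avoids_pattern Bs rho}"
    using L1[OF _ pos] C unfolding avoids_pattern_def by auto
  show "toW N ` {Bs. ordered_set_partition N Bs \<and> map card Bs = b \<and> avoids_pattern Bs rho} \<subseteq> {w \<in> Wb N b. \<not> C w}"
  proof
    fix w assume "w \<in> toW N ` {Bs. ordered_set_partition N Bs \<and> map card Bs = b \<and> avoids_pattern Bs rho}"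
    then obtain Bs where Bs: "ordered_set_partition N Bs" "map card Bs = b" "avoids_pattern Bs rho" "w = toW N Bs" by blast
    have "w \<in> Wb N b" "toB N (length b) w = Bs" using L3[OF Bs(1,2)] Bs(4) by auto
    then show "w \<in> {w \<in> Wb N b. \<not> C w}" using C Bs(3) unfolding avoids_pattern_def by auto
  qed
qed

lemma pat123: "w \<in> Wb N b \<Longrightarrow> contains_pattern (toB N (length b) w) [1,2,3] \<longleftrightarrow> c123 N w"
proof -
  assume w: "w \<in> Wb N b"
  show ?thesis
  proof
    assume "contains_pattern (toB N (length b) w) [1,2,3]"
    then obtain i0 i1 i2 x0 x1 x2 where h: "i0 < i1" "i1 < i2" "i2 < length b"
      "x0 \<in> toB N (length b) w ! i0" "x1 \<in> toB N (length b) w ! i1" "x2 \<in> toB N (length b) w ! i2"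
      "x0 < x1" "x1 < x2" unfolding cp3 toB_len by auto
    then have "x0 \<in> {1..N}" "x2 \<in> {1..N}" "w x0 = i0" "w x1 = i1" "w x2 = i2" by (auto simp: toB_nth)
    then show "c123 N w" unfolding c123_def using h by (intro exI[of _ x0] exI[of _ x1] exI[of _ x2]) auto
  next
    assume "c123 N w"
    then obtain p q r where h: "1 \<le> p" "p < q" "q < r" "r \<le> N" "w p < w q" "w q < w r" unfolding c123_def by blast
    have "w r < length b" using w h unfolding Wb_def by auto
    then show "contains_pattern (toB N (length b) w) [1,2,3]" unfolding cp3 toB_len using h
      by (intro exI[of _ "w p"] exI[of _ "w q"] exI[of _ "w r"] exI[of _ p] exI[of _ q] exI[of _ r]) (auto simp: toB_nth)
  qed
qed

lemma pat132: "w \<in> Wb N b \<Longrightarrow> contains_pattern (toB N (length b) w) [1,3,2] \<longleftrightarrow> c132 N w"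
proof -
  assume w: "w \<in> Wb N b"
  show ?thesis
  proof
    assume "contains_pattern (toB N (length b) w) [1,3,2]"
    then obtain i0 i1 i2 x0 x1 x2 where h: "i0 < i1" "i1 < i2" "i2 < length b"
      "x0 \<in> toB N (length b) w ! i0" "x1 \<in> toB N (length b) w ! i1" "x2 \<in> toB N (length b) w ! i2"
      "x0 < x2" "x2 < x1" unfolding cp3 toB_len by auto
    then have "x0 \<in> {1..N}" "x1 \<in> {1..N}" "w x0 = i0" "w x1 = i1" "w x2 = i2" by (auto simp: toB_nth)
    then show "c132 N w" unfolding c132_def using h by (intro exI[of _ x0] exI[of _ x2] exI[of _ x1]) auto
  next
    assume "c132 N w"
    then obtain p q r where h: "1 \<le> p" "p < q" "q < r" "r \<le> N" "w p < w r" "w r < w q" unfolding c132_def by blast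
    have "w q < length b" using w h unfolding Wb_def by auto
    then show "contains_pattern (toB N (length b) w) [1,3,2]" unfolding cp3 toB_len using h
      by (intro exI[of _ "w p"] exI[of _ "w r"] exI[of _ "w q"] exI[of _ p] exI[of _ r] exI[of _ q]) (auto simp: toB_nth)
  qed
qed

theorem theorem7:
  fixes b :: "nat list"
  assumes "\<forall>x \<in> set b. 0 < x"
  shows "op_count b [1, 2, 3] = op_count b [1, 3, 2]"
proof -
  have "op_count b [1, 2, 3] = card {w\<in>Wb (sum_list b) b. \<not> c123 (sum_list b) w}"
    unfolding op_count_def by (rule bij_gen[OF assms pat123])
  also have "\<dots> = card {w\<in>Wb (sum_list b) b. \<not> c132 (sum_list b) w}" by (rule card_A)
  also have "\<dots> = op_count b [1, 3, 2]"
    unfolding op_count_def by (rule bij_gen[OF assms pat132, symmetric])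
  finally show ?thesis .
qed


end
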